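(* For problem (P) with $\Phi_\lambda=\Phi_{0,\lambda}$: (i) every stationary point of (P) is a local minimizer of $F$; (ii) if $x^*$ is a local minimizer of $F$ with $F(x^* )<\infty$, and the Slater condition $$\{x:\ x\in\operatorname{ri}(\operatorname{dom}f),\ Ax\in\operatorname{ri}(\operatorname{dom}g),\ (Bx-b)_{\bar J_*}=0\}\neq\emptyset$$ holds, where $J_*=\{i:(Bx^*-b)_i\ne0\}$, $\bar J_*=[r]\setminus J_*$, and "$\operatorname{ri}$" may be omitted for $f$ (resp. $g$) when $f$ (resp. $g$) is polyhedral, then $x^*$ is a stationary point of (P).
   Context: Let $f:\mathbb R^n\to(-\infty,\infty]$, $g:\mathbb R^m\to(-\infty,\infty]$ be proper, lsc and convex; $A\in\mathbb R^{m\times n}$, $B\in\mathbb R^{r\times n}$, $b\in\mathbb R^r$, $\lambda\in\mathbb R^r$, $\lambda>0$. $\Phi_{0,\lambda}(u)=\sum_{i=1}^r\lambda_i\mathbf 1_{\{u_i\neq0\}}$; problem (P) is $\min_x F(x)=f(x)+g(Ax)+\Phi_{0,\lambda}(Bx-b)$. $\partial$ denotes the limiting subdifferential (the convex subdifferential for convex functions); $\partial\Phi_{0,\lambda}(u)=\{z: z_i\in\mathbb R\text{ if }u_i=0,\ z_i=0\text{ otherwise}\}$. A point $x^*$ is a stationary point of (P) if $0\in\partial f(x^* )+A^\top\partial g(Ax^* )+B^\top\partial\Phi_{0,\lambda}(Bx^*-b)$. $\operatorname{ri}$ denotes relative interior. *)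

theory Defs
  imports "HOL-Analysis.Analysis"
begin

text \<open>Extended-real-valued functions on Euclidean spaces; the value \<infinity> encodes
  +\<infinity> (functions with values in (-\<infinity>,\<infinity>]).\<close>

definition edom :: "('a \<Rightarrow> ereal) \<Rightarrow> 'a set" where
  "edom f = {x. f x < \<infinity>}"

definition proper_fun :: "('a \<Rightarrow> ereal) \<Rightarrow> bool" where
  "proper_fun f \<longleftrightarrow> (\<forall>x. f x \<noteq> -\<infinity>) \<and> (\<exists>x. f x < \<infinity>)"

definition lsc_fun :: "('a::topological_space \<Rightarrow> ereal) \<Rightarrow> bool" where
  "lsc_fun f \<longleftrightarrow> (\<forall>x. f x \<le> Liminf (at x) f)"

definition convex_fun :: "('a::real_vector \<Rightarrow> ereal) \<Rightarrow> bool" where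
  "convex_fun f \<longleftrightarrow> (\<forall>x y. \<forall>t::real. 0 < t \<and> t < 1 \<longrightarrow>
      f ((1 - t) *\<^sub>R x + t *\<^sub>R y) \<le> ereal (1 - t) * f x + ereal t * f y)"

definition csubdiff :: "('a::real_inner \<Rightarrow> ereal) \<Rightarrow> 'a \<Rightarrow> 'a set" where
  "csubdiff f x = {v. f x < \<infinity> \<and> (\<forall>y. f x + ereal (v \<bullet> (y - x)) \<le> f y)}"

definition polyhedral_fun :: "('a::euclidean_space \<Rightarrow> ereal) \<Rightarrow> bool" where
  "polyhedral_fun f \<longleftrightarrow> polyhedron {(x, t::real). f x \<le> ereal t}"

definition Phi0 :: "real^'r \<Rightarrow> real^'r \<Rightarrow> real" where
  "Phi0 lam u = (\<Sum>i\<in>UNIV. if u $ i \<noteq> 0 then lam $ i else 0)"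

text \<open>Limiting subdifferential of \<Phi>_{0,\<lambda>}, as given in the paper.\<close>
definition subdiff_Phi0 :: "real^'r \<Rightarrow> (real^'r) set" where
  "subdiff_Phi0 u = {z. \<forall>i. u $ i \<noteq> 0 \<longrightarrow> z $ i = 0}"

definition Fobj :: "(real^'n \<Rightarrow> ereal) \<Rightarrow> (real^'m \<Rightarrow> ereal) \<Rightarrow> real^'n^'m
    \<Rightarrow> real^'n^'r \<Rightarrow> real^'r \<Rightarrow> real^'r \<Rightarrow> real^'n \<Rightarrow> ereal" where
  "Fobj f g A B b lam x = f x + g (A *v x) + ereal (Phi0 lam (B *v x - b))"

definition stationary_P :: "(real^'n \<Rightarrow> ereal) \<Rightarrow> (real^'m \<Rightarrow> ereal) \<Rightarrow> real^'n^'m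
    \<Rightarrow> real^'n^'r \<Rightarrow> real^'r \<Rightarrow> real^'n \<Rightarrow> bool" where
  "stationary_P f g A B b x \<longleftrightarrow>
     (\<exists>v w z. v \<in> csubdiff f x \<and> w \<in> csubdiff g (A *v x) \<and> z \<in> subdiff_Phi0 (B *v x - b)
        \<and> v + transpose A *v w + transpose B *v z = 0)"

definition local_min :: "('a::metric_space \<Rightarrow> ereal) \<Rightarrow> 'a \<Rightarrow> bool" where
  "local_min F x \<longleftrightarrow> (\<exists>e>0. \<forall>y\<in>ball x e. F x \<le> F y)"

end

theory Submission
  imports Defs
begin


lemma inner_transpose_mv: "(transpose A *v y) \<bullet> x = y \<bullet> ((A::real^'n^'m) *v x)"
  by (metis dot_lmul_matrix vector_transpose_matrix inner_commute)

lemma normal_cc_hull: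
  fixes a :: "'i \<Rightarrow> 'a::euclidean_space"
  assumes "x \<in> convex_cone hull (a ` {h\<in>F. a h \<bullet> p = b h})"
    and "\<forall>h\<in>F. a h \<bullet> q \<le> b h"
  shows "x \<bullet> (q - p) \<le> 0"
proof -
  let ?N = "{x. x \<bullet> (q - p) \<le> 0}"
  have "convex_cone ?N"
    unfolding convex_cone_iff
    by (auto simp: inner_add_left mult_nonneg_nonpos add_nonpos_nonpos)
  moreover have "a ` {h\<in>F. a h \<bullet> p = b h} \<subseteq> ?N"
    using assms(2) by (auto simp: inner_diff_right)
  ultimately have "convex_cone hull (a ` {h\<in>F. a h \<bullet> p = b h}) \<subseteq> ?N"
    by (simp add: hull_minimal)
  then show ?thesis using assms(1) by auto
qed

lemma farkas_active:
  fixes a :: "'i \<Rightarrow> 'a::euclidean_space" and b :: "'i \<Rightarrow> real"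
  assumes fin: "finite F" and pP: "\<forall>h\<in>F. a h \<bullet> p \<le> b h"
    and nrm: "\<forall>q. (\<forall>h\<in>F. a h \<bullet> q \<le> b h) \<longrightarrow> n \<bullet> (q - p) \<le> 0"
  shows "n \<in> convex_cone hull (a ` {h\<in>F. a h \<bullet> p = b h})"
proof (rule ccontr)
  let ?K = "convex_cone hull (a ` {h\<in>F. a h \<bullet> p = b h})"
  assume nK: "n \<notin> ?K"
  have "closed ?K" by (rule closed_convex_cone_hull) (use fin in auto)
  then obtain c \<beta> where c1: "c \<bullet> n < \<beta>" and c2: "\<forall>x\<in>?K. \<beta> < c \<bullet> x"
    using separating_hyperplane_closed_point[OF convex_convex_cone_hull _ nK] by blast
  have b0: "\<beta> < 0" using c2 convex_cone_hull_contains_0 by fastforce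
  have cK: "0 \<le> c \<bullet> x" if "x \<in> ?K" for x
  proof (rule ccontr)
    assume "\<not> 0 \<le> c \<bullet> x"
    then have neg: "c \<bullet> x < 0" by simp
    define t where "t = (\<beta> - 1) / (c \<bullet> x)"
    have "t \<ge> 0" unfolding t_def using neg b0 by (simp add: divide_nonpos_neg)
    then have "t *\<^sub>R x \<in> ?K"
      using convex_cone_scaleR[OF convex_cone_convex_cone_hull] that by blast
    then have "\<beta> < c \<bullet> (t *\<^sub>R x)" using c2 by blast
    also have "c \<bullet> (t *\<^sub>R x) = \<beta> - 1" unfolding t_def using neg by simp
    finally show False by simp
  qed
  define d where "d = - c"
  have act: "a h \<bullet> d \<le> 0" if "h \<in> F" "a h \<bullet> p = b h" for h
  proof -
    have "a h \<in> ?K" using that by (intro hull_inc) auto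
    then show ?thesis using cK[of "a h"] by (simp add: d_def inner_commute)
  qed
  have nd: "n \<bullet> d > 0" using c1 b0 by (simp add: d_def inner_commute)
  have ev: "\<forall>\<^sub>F t in at_right (0::real). \<forall>h\<in>F. a h \<bullet> (p + t *\<^sub>R d) \<le> b h"
  proof (rule eventually_ball_finite[OF fin], rule ballI)
    fix h assume hF: "h \<in> F"
    show "\<forall>\<^sub>F t in at_right (0::real). a h \<bullet> (p + t *\<^sub>R d) \<le> b h"
    proof (cases "a h \<bullet> p = b h")
      case True
      have "\<forall>\<^sub>F t in at_right (0::real). t > 0" by (simp add: eventually_at_right_less)
      then show ?thesis
      proof (rule eventually_mono)
        fix t :: real assume "t > 0"
        then show "a h \<bullet> (p + t *\<^sub>R d) \<le> b h"
          using act[OF hF True] True by (simp add: inner_add_right mult_nonneg_nonpos)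
      qed
    next
      case False
      then have lt: "a h \<bullet> p < b h" using pP hF by force
      have "((\<lambda>t. a h \<bullet> (p + t *\<^sub>R d)) \<longlongrightarrow> a h \<bullet> (p + 0 *\<^sub>R d)) (at_right 0)"
        by (intro tendsto_intros)
      then have "((\<lambda>t. a h \<bullet> (p + t *\<^sub>R d)) \<longlongrightarrow> a h \<bullet> p) (at_right 0)" by simp
      from order_tendstoD(2)[OF this lt] show ?thesis by (rule eventually_mono) simp
    qed
  qed
  moreover have "\<forall>\<^sub>F t in at_right (0::real). t > 0" by (simp add: eventually_at_right_less)
  ultimately have "\<forall>\<^sub>F t in at_right (0::real). t > 0 \<and> (\<forall>h\<in>F. a h \<bullet> (p + t *\<^sub>R d) \<le> b h)"
    by (simp add: eventually_conj_iff)
  then obtain t :: real where t: "t > 0" "\<forall>h\<in>F. a h \<bullet> (p + t *\<^sub>R d) \<le> b h"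
    using eventually_happens trivial_limit_at_right_real by blast
  have "n \<bullet> (p + t *\<^sub>R d - p) \<le> 0" using nrm t(2) by blast
  moreover have "n \<bullet> (p + t *\<^sub>R d - p) > 0" using t(1) nd by simp
  ultimately show False by simp
qed



lemma polyhedron_normal_split:
  fixes P1 P2 :: "'a::euclidean_space set"
  assumes P1: "polyhedron P1" and P2: "polyhedron P2" and pin: "p \<in> P1" "p \<in> P2"
    and nrm: "\<forall>q\<in>P1\<inter>P2. n \<bullet> (q - p) \<le> 0"
  shows "\<exists>n1 n2. n = n1 + n2 \<and> (\<forall>q\<in>P1. n1 \<bullet> (q - p) \<le> 0) \<and> (\<forall>q\<in>P2. n2 \<bullet> (q - p) \<le> 0)"
proof -
  obtain F1 where F1: "finite F1" "P1 = \<Inter>F1" "\<forall>h\<in>F1. \<exists>a b. a \<noteq> 0 \<and> h = {x. a \<bullet> x \<le> b}"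
    using P1 unfolding polyhedron_def by blast
  obtain F2 where F2: "finite F2" "P2 = \<Inter>F2" "\<forall>h\<in>F2. \<exists>a b. a \<noteq> 0 \<and> h = {x. a \<bullet> x \<le> b}"
    using P2 unfolding polyhedron_def by blast
  have "\<forall>h\<in>F1\<union>F2. \<exists>ab. h = {x. fst ab \<bullet> x \<le> snd ab}"
    using F1(3) F2(3) by fastforce
  then have "\<exists>ab. \<forall>h\<in>F1\<union>F2. h = {x. fst (ab h) \<bullet> x \<le> snd (ab h)}"
    by (rule bchoice)
  then obtain ab where ab: "\<forall>h\<in>F1\<union>F2. h = {x. fst (ab h) \<bullet> x \<le> snd (ab h)}"
    by blast
  define a where "a = (\<lambda>h. fst (ab h))"
  define b where "b = (\<lambda>h. snd (ab h))"
  have hs: "h = {x. a h \<bullet> x \<le> b h}" if "h \<in> F1 \<union> F2" for h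
    using ab that unfolding a_def b_def by blast
  have P1e: "P1 = {q. \<forall>h\<in>F1. a h \<bullet> q \<le> b h}"
    using hs F1(2) by auto
  have P2e: "P2 = {q. \<forall>h\<in>F2. a h \<bullet> q \<le> b h}"
    using hs F2(2) by auto
  have "n \<in> convex_cone hull (a ` {h\<in>F1\<union>F2. a h \<bullet> p = b h})"
  proof (rule farkas_active)
    show "finite (F1 \<union> F2)" using F1 F2 by simp
    show "\<forall>h\<in>F1 \<union> F2. a h \<bullet> p \<le> b h" using pin P1e P2e by auto
    show "\<forall>q. (\<forall>h\<in>F1 \<union> F2. a h \<bullet> q \<le> b h) \<longrightarrow> n \<bullet> (q - p) \<le> 0"
      using nrm P1e P2e by auto
  qed
  also have "a ` {h\<in>F1\<union>F2. a h \<bullet> p = b h} = a ` {h\<in>F1. a h \<bullet> p = b h} \<union> a ` {h\<in>F2. a h \<bullet> p = b h}"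
    by blast
  finally obtain n1 n2 where n12: "n1 \<in> convex_cone hull (a ` {h\<in>F1. a h \<bullet> p = b h})"
     "n2 \<in> convex_cone hull (a ` {h\<in>F2. a h \<bullet> p = b h})" "n = n1 + n2"
    unfolding convex_cone_hull_Un by blast
  show ?thesis
  proof (intro exI conjI ballI)
    show "n = n1 + n2" by fact
    fix q assume "q \<in> P1" then show "n1 \<bullet> (q - p) \<le> 0"
      using normal_cc_hull[OF n12(1)] P1e by blast
  next
    fix q assume "q \<in> P2" then show "n2 \<bullet> (q - p) \<le> 0"
      using normal_cc_hull[OF n12(2)] P2e by blast
  qed
qed

lemma polyhedron_linear_preimage:
  fixes h :: "'a::euclidean_space \<Rightarrow> 'b::euclidean_space"
  assumes S: "polyhedron S" and lin: "linear h"
  shows "polyhedron (h -` S)"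
proof -
  obtain F where F: "finite F" "S = \<Inter>F" "\<forall>H\<in>F. \<exists>a b. a \<noteq> 0 \<and> H = {x. a \<bullet> x \<le> b}"
    using S unfolding polyhedron_def by blast
  have eqS: "h -` S = \<Inter>((\<lambda>H. h -` H) ` F)" using F(2) by auto
  have ph: "polyhedron (h -` H)" if "H \<in> F" for H
  proof -
    have "\<exists>a b. a \<noteq> 0 \<and> H = {x. a \<bullet> x \<le> b}" using F(3) that by simp
    then obtain a b where H: "H = {x. a \<bullet> x \<le> b}" by (elim exE conjE)
    have adj: "adjoint h a \<bullet> x = a \<bullet> h x" for x
      by (metis adjoint_works[OF lin] inner_commute)
    have eq: "h -` H = {x. adjoint h a \<bullet> x \<le> b}"
      by (simp add: H adj)
    show ?thesis unfolding eq by (rule polyhedron_halfspace_le)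
  qed
  show ?thesis unfolding eqS
    by (rule polyhedron_Inter) (use F(1) ph in auto)
qed



lemma strict_comb:
  fixes a1 a2 t1 t2 u v :: real
  assumes "a1 < t1" "a2 < t2" "u \<ge> 0" "v \<ge> 0" "u + v = 1"
  shows "u * a1 + v * a2 < u * t1 + v * t2"
proof (cases "u = 0")
  case True then show ?thesis using assms by simp
next
  case False
  then have "u > 0" using assms by simp
  then have "u * a1 < u * t1" using assms by simp
  moreover have "v * a2 \<le> v * t2" using assms by (simp add: mult_left_mono)
  ultimately show ?thesis by simp
qed

lemma core_kkt:
  fixes G :: "'a::euclidean_space \<Rightarrow> real"
  assumes cvx: "convex_on D G" and P: "polyhedron P"
    and psD: "ps \<in> D" and psP: "ps \<in> P"
    and opt: "\<forall>p\<in>D\<inter>P. G ps + c \<bullet> ps \<le> G p + c \<bullet> p"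
    and p0D: "p0 \<in> rel_interior D" and p0P: "p0 \<in> P"
  shows "\<exists>u. (\<forall>p\<in>D. G ps + u \<bullet> (p - ps) \<le> G p) \<and> (\<forall>p\<in>P. 0 \<le> (u + c) \<bullet> (p - ps))"
proof -
  have cD: "convex D" using cvx by (simp add: convex_on_def)
  have p0in: "p0 \<in> D" using p0D rel_interior_subset by blast
  define Aff where "Aff = affine hull D"
  define M where "M = span ((\<lambda>x. -p0 + x) ` (D - {p0}))"
  have AffM: "Aff = (\<lambda>x. p0 + x) ` M"
    unfolding Aff_def M_def by (rule affine_hull_span2[OF p0in])
  have DAff: "D \<subseteq> Aff" unfolding Aff_def by (rule hull_subset)
  have affA: "affine Aff" unfolding Aff_def by simp
  have subM: "subspace M" unfolding M_def by simp
  define W where "W = {w. \<forall>m\<in>M. w \<bullet> m = 0}"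
  define \<mu> where "\<mu> = G ps + c \<bullet> ps"
  define C1 :: "('a \<times> real) set" where "C1 = {z. fst z \<in> D \<and> G (fst z) + c \<bullet> fst z < snd z}"
  define C2 :: "('a \<times> real) set" where
    "C2 = {z. \<exists>q w \<tau>. z = (q + w, \<tau>) \<and> q \<in> P \<and> q \<in> Aff \<and> w \<in> W \<and> \<tau> \<le> \<mu>}"
  have convC1: "convex C1"
    unfolding convex_def
  proof (intro ballI allI impI)
    fix x y :: "'a \<times> real" and u v :: real
    assume x: "x \<in> C1" and y: "y \<in> C1" and uv: "0 \<le> u" "0 \<le> v" "u + v = 1"
    have xD: "fst x \<in> D" and yD: "fst y \<in> D" using x y by (auto simp: C1_def)
    have m: "u *\<^sub>R fst x + v *\<^sub>R fst y \<in> D" using cD xD yD uv by (simp add: convex_def)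
    have G: "G (u *\<^sub>R fst x + v *\<^sub>R fst y) \<le> u * G (fst x) + v * G (fst y)"
      using cvx xD yD uv unfolding convex_on_def by blast
    have lt: "u * (G (fst x) + c \<bullet> fst x) + v * (G (fst y) + c \<bullet> fst y) < u * snd x + v * snd y"
      by (rule strict_comb) (use x y uv in \<open>auto simp: C1_def\<close>)
    have "G (u *\<^sub>R fst x + v *\<^sub>R fst y) + c \<bullet> (u *\<^sub>R fst x + v *\<^sub>R fst y)
        \<le> u * (G (fst x) + c \<bullet> fst x) + v * (G (fst y) + c \<bullet> fst y)"
      using G by (simp add: inner_add_right algebra_simps)
    with lt m show "u *\<^sub>R x + v *\<^sub>R y \<in> C1" by (simp add: C1_def)
  qed
  have convPA: "convex (P \<inter> Aff)"
    using P affA by (simp add: convex_Int polyhedron_imp_convex affine_imp_convex)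
  have subW: "subspace W" unfolding W_def subspace_def
    by (auto simp: inner_add_left)
  have convC2: "convex C2"
    unfolding convex_def
  proof (intro ballI allI impI)
    fix x y :: "'a \<times> real" and u v :: real
    assume x: "x \<in> C2" and y: "y \<in> C2" and uv: "0 \<le> u" "0 \<le> v" "u + v = 1"
    obtain q1 w1 t1 where 1: "x = (q1 + w1, t1)" "q1 \<in> P \<inter> Aff" "w1 \<in> W" "t1 \<le> \<mu>"
      using x by (auto simp: C2_def)
    obtain q2 w2 t2 where 2: "y = (q2 + w2, t2)" "q2 \<in> P \<inter> Aff" "w2 \<in> W" "t2 \<le> \<mu>"
      using y by (auto simp: C2_def)
    have "u *\<^sub>R q1 + v *\<^sub>R q2 \<in> P \<inter> Aff" using convPA 1 2 uv by (simp add: convex_def)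
    moreover have "u *\<^sub>R w1 + v *\<^sub>R w2 \<in> W"
      using subW 1 2 by (simp add: subspace_add subspace_scale)
    moreover have "u * t1 + v * t2 \<le> \<mu>"
    proof -
      have "u * t1 + v * t2 \<le> u * \<mu> + v * \<mu>"
        using 1 2 uv by (intro add_mono mult_left_mono) auto
      moreover have "u * \<mu> + v * \<mu> = \<mu>" using uv(3) by (metis distrib_right mult_1)
      ultimately show ?thesis by simp
    qed
    moreover have "u *\<^sub>R x + v *\<^sub>R y = ((u *\<^sub>R q1 + v *\<^sub>R q2) + (u *\<^sub>R w1 + v *\<^sub>R w2), u * t1 + v * t2)"
      using 1 2 by (simp add: algebra_simps)
    ultimately show "u *\<^sub>R x + v *\<^sub>R y \<in> C2" unfolding C2_def by blast
  qed
  have disj: "C2 \<inter> C1 = {}"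
  proof (rule ccontr)
    assume "C2 \<inter> C1 \<noteq> {}"
    then obtain z where z1: "z \<in> C1" and z2: "z \<in> C2" by blast
    obtain q w \<tau> where q: "z = (q + w, \<tau>)" "q \<in> P" "q \<in> Aff" "w \<in> W" "\<tau> \<le> \<mu>"
      using z2 by (auto simp: C2_def)
    have pD: "q + w \<in> D" and lt: "G (q + w) + c \<bullet> (q + w) < \<tau>" using z1 q by (auto simp: C1_def)
    obtain m1 where m1: "m1 \<in> M" "q + w = p0 + m1" using pD DAff AffM by blast
    obtain m2 where m2: "m2 \<in> M" "q = p0 + m2" using q(3) AffM by blast
    have "w = m1 - m2" using m1 m2 by (simp add: algebra_simps)
    then have "w \<in> M" using subM m1 m2 by (simp add: subspace_diff)
    then have "w \<bullet> w = 0" using q(4) by (simp add: W_def)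
    then have "w = 0" by simp
    then have "q \<in> D \<inter> P" using pD q by simp
    then have "\<mu> \<le> G q + c \<bullet> q" using opt by (simp add: \<mu>_def)
    then show False using lt q \<open>w = 0\<close> by simp
  qed
  have psA: "ps \<in> Aff" using psD DAff by blast
  have inC2: "(q, \<tau>) \<in> C2" if "q \<in> P" "q \<in> Aff" "\<tau> \<le> \<mu>" for q \<tau>
  proof -
    have "0 \<in> W" using subW subspace_0 by blast
    then show ?thesis unfolding C2_def using that
      by (intro CollectI exI[of _ q] exI[of _ 0] exI[of _ \<tau>]) simp
  qed
  have inC2w: "(ps + w, \<mu>) \<in> C2" if "w \<in> W" for w
    unfolding C2_def using that psP psA
      by (intro CollectI exI[of _ ps] exI[of _ w] exI[of _ \<mu>]) simp
  have inC1: "(p, \<tau>) \<in> C1" if "p \<in> D" "G p + c \<bullet> p < \<tau>" for p \<tau>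
    unfolding C1_def using that by simp
  have ne1: "C1 \<noteq> {}" using inC1[OF psD, of "G ps + c \<bullet> ps + 1"] by auto
  have ne2: "C2 \<noteq> {}" using inC2[OF psP psA, of \<mu>] by auto
  obtain a b where ab: "a \<noteq> 0" "\<forall>x\<in>C2. a \<bullet> x \<le> b" "\<forall>x\<in>C1. a \<bullet> x \<ge> b"
    using separating_hyperplane_sets[OF convC2 convC1 ne2 ne1 disj] by blast
  obtain a1 \<alpha> where a: "a = (a1, \<alpha>)" by (cases a)
  have sep2: "a1 \<bullet> q + \<alpha> * \<tau> \<le> b" if "(q, \<tau>) \<in> C2" for q \<tau>
    using ab(2) that a by (auto simp: inner_Pair)
  have sep1: "a1 \<bullet> p + \<alpha> * \<tau> \<ge> b" if "(p, \<tau>) \<in> C1" for p \<tau>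
    using ab(3) that a by (fastforce simp: inner_Pair)
  have upper: "b \<le> a1 \<bullet> ps + \<alpha> * \<mu> + \<alpha> * e" if "e > 0" for e
  proof -
    have "b \<le> a1 \<bullet> ps + \<alpha> * (\<mu> + e)"
      by (rule sep1, rule inC1[OF psD]) (use that in \<open>simp add: \<mu>_def\<close>)
    then show ?thesis by (simp add: algebra_simps)
  qed
  have low: "a1 \<bullet> ps + \<alpha> * \<mu> \<le> b" using sep2[OF inC2[OF psP psA order_refl]] .
  have alpha_ge: "\<alpha> \<ge> 0"
  proof -
    have "a1 \<bullet> ps + \<alpha> * (\<mu> - 1) \<le> b" using sep2[OF inC2[OF psP psA]] by simp
    moreover have "b \<le> a1 \<bullet> ps + \<alpha> * \<mu> + \<alpha> * 1" using upper[of 1] by simp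
    ultimately show ?thesis by (simp add: algebra_simps)
  qed
  have a1W: "a1 \<bullet> w = 0" if "w \<in> W" for w
  proof (rule ccontr)
    assume nz: "a1 \<bullet> w \<noteq> 0"
    define t where "t = (b - a1 \<bullet> ps - \<alpha> * \<mu> + 1) / (a1 \<bullet> w)"
    have "t *\<^sub>R w \<in> W" using subW that by (simp add: subspace_scale)
    from sep2[OF inC2w[OF this]] have "a1 \<bullet> ps + t * (a1 \<bullet> w) + \<alpha> * \<mu> \<le> b"
      by (simp add: inner_add_right)
    moreover have "t * (a1 \<bullet> w) = b - a1 \<bullet> ps - \<alpha> * \<mu> + 1" unfolding t_def using nz by simp
    ultimately show False by simp
  qed
  have a1M: "a1 \<in> M"
  proof -
    obtain y z where yz: "y \<in> span M" "\<And>w. w \<in> span M \<Longrightarrow> orthogonal z w" "a1 = y + z"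
      using orthogonal_subspace_decomp_exists[of M a1] by blast
    have yM: "y \<in> M" using yz(1) subM by (metis span_eq_iff)
    have zW: "z \<in> W" unfolding W_def using yz(2) span_base by (fastforce simp: orthogonal_def)
    have "a1 \<bullet> z = 0" using a1W[OF zW] .
    moreover have "y \<bullet> z = 0" using yz(2)[OF yz(1)] by (simp add: orthogonal_def inner_commute)
    ultimately have "z \<bullet> z = 0" using yz(3) by (simp add: inner_add_left)
    then have "z = 0" by simp
    then show ?thesis using yM yz(3) by simp
  qed
  have alpha_pos: "\<alpha> > 0"
  proof (rule ccontr)
    assume "\<not> \<alpha> > 0"
    then have a0: "\<alpha> = 0" using alpha_ge by simp
    then have a1nz: "a1 \<noteq> 0" using ab(1) a by (auto simp: zero_prod_def)
    have lb: "b \<le> a1 \<bullet> p" if "p \<in> D" for p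
      using sep1[OF inC1[OF that, of "G p + c \<bullet> p + 1"]] a0 by simp
    have ub: "a1 \<bullet> p0 \<le> b" using sep2[OF inC2[OF p0P _ order_refl]] a0 p0in DAff by auto
    obtain e where e: "e > 0" "ball p0 e \<inter> affine hull D \<subseteq> D"
      using p0D mem_rel_interior_ball by blast
    define t where "t = e / ((2 * norm a1 + 2))"
    have tpos: "t > 0" unfolding t_def using e norm_ge_zero[of a1] by (intro divide_pos_pos) linarith+
    have "norm (t *\<^sub>R a1) < e"
    proof -
      have "norm (t *\<^sub>R a1) = t * norm a1" using tpos by simp
      also have "\<dots> < e"
      proof -
        have "e * norm a1 < e * ((2 * norm a1 + 2))" using e norm_ge_zero[of a1] by (intro mult_strict_left_mono) linarith+
        moreover have "(2 * norm a1 + 2) > 0" using norm_ge_zero[of a1] by linarith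
        ultimately show ?thesis unfolding t_def by (simp add: field_simps)
      qed
      finally show ?thesis .
    qed
    then have "p0 - t *\<^sub>R a1 \<in> ball p0 e" by (simp add: dist_norm)
    moreover have "p0 - t *\<^sub>R a1 \<in> affine hull D"
    proof -
      have "(-t) *\<^sub>R a1 \<in> M" using subM a1M by (metis subspace_scale)
      then have "p0 + (-t) *\<^sub>R a1 \<in> Aff" using AffM by blast
      then show ?thesis by (simp add: Aff_def)
    qed
    ultimately have "p0 - t *\<^sub>R a1 \<in> D" using e(2) by blast
    from lb[OF this] ub have "a1 \<bullet> (p0 - t *\<^sub>R a1) \<ge> a1 \<bullet> p0" by simp
    then have "t * (a1 \<bullet> a1) \<le> 0" by (simp add: inner_diff_right)
    then have "a1 \<bullet> a1 \<le> 0" using tpos by (simp add: mult_le_0_iff)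
    then have "a1 = 0" using inner_ge_zero[of a1] inner_eq_zero_iff[of a1] by linarith
    with a1nz show False by simp
  qed
  have b_eq: "b \<le> a1 \<bullet> ps + \<alpha> * \<mu>"
  proof (rule ccontr)
    assume "\<not> ?thesis"
    then have "b - (a1 \<bullet> ps + \<alpha> * \<mu>) > 0" by simp
    define e where "e = (b - (a1 \<bullet> ps + \<alpha> * \<mu>)) / (2 * \<alpha>)"
    have "e > 0" unfolding e_def using alpha_pos \<open>b - (a1 \<bullet> ps + \<alpha> * \<mu>) > 0\<close> by simp
    from upper[OF this] have "b \<le> a1 \<bullet> ps + \<alpha> * \<mu> + (b - (a1 \<bullet> ps + \<alpha> * \<mu>)) / 2"
      unfolding e_def using alpha_pos by simp
    with \<open>b - (a1 \<bullet> ps + \<alpha> * \<mu>) > 0\<close> show False by (simp add: field_simps)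
  qed
  define n where "n = (1 / \<alpha>) *\<^sub>R a1"
  have S1: "\<alpha> * (G p + c \<bullet> p - \<mu>) + a1 \<bullet> (p - ps) \<ge> 0" if pD: "p \<in> D" for p
  proof (rule ccontr)
    let ?X = "\<alpha> * (G p + c \<bullet> p - \<mu>) + a1 \<bullet> (p - ps)"
    assume "\<not> ?X \<ge> 0"
    then have neg: "?X < 0" by simp
    define e where "e = - ?X / (2 * \<alpha>)"
    have epos: "e > 0" unfolding e_def using neg alpha_pos by (simp add: divide_pos_pos)
    have "b \<le> a1 \<bullet> p + \<alpha> * (G p + c \<bullet> p + e)"
      by (rule sep1, rule inC1[OF pD]) (use epos in simp)
    with low have "0 \<le> ?X + \<alpha> * e" by (simp add: algebra_simps inner_diff_right)
    moreover have "\<alpha> * e = - ?X / 2" unfolding e_def using alpha_pos by simp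
    ultimately show False using neg by (simp add: field_simps)
  qed
  have S1': "G p \<ge> G ps - (c + n) \<bullet> (p - ps)" if pD: "p \<in> D" for p
  proof -
    have "0 \<le> (G p + c \<bullet> p - \<mu>) + (1/\<alpha>) * (a1 \<bullet> (p - ps))"
      using S1[OF pD] alpha_pos
      by (simp add: field_simps)
    then show ?thesis unfolding n_def \<mu>_def by (simp add: inner_add_left inner_diff_right algebra_simps)
  qed
  have S2: "n \<bullet> (q - ps) \<le> 0" if "q \<in> P \<inter> Aff" for q
  proof -
    have "a1 \<bullet> q + \<alpha> * \<mu> \<le> b" using sep2[OF inC2[OF _ _ order_refl]] that by blast
    with b_eq have "a1 \<bullet> (q - ps) \<le> 0" by (simp add: inner_diff_right)
    then show ?thesis unfolding n_def using alpha_pos by (simp add: divide_nonpos_pos)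
  qed
  obtain n1 n2 where nn: "n = n1 + n2" "\<forall>q\<in>P. n1 \<bullet> (q - ps) \<le> 0" "\<forall>q\<in>Aff. n2 \<bullet> (q - ps) \<le> 0"
    using polyhedron_normal_split[OF P affine_imp_polyhedron[OF affA] psP psA] S2 by blast
  have n2z: "n2 \<bullet> (p - ps) = 0" if "p \<in> D" for p
  proof -
    have pA: "p \<in> Aff" using that DAff by blast
    have "(2::real) + (-1) = 1" by simp
    then have "(2::real) *\<^sub>R ps + (-1::real) *\<^sub>R p \<in> Aff"
      using affA psA pA unfolding affine_def by blast
    then have "n2 \<bullet> ((2::real) *\<^sub>R ps + (-1::real) *\<^sub>R p - ps) \<le> 0" using nn(3) by blast
    moreover have "(2::real) *\<^sub>R ps + (-1::real) *\<^sub>R p - ps = - (p - ps)" by (simp add: algebra_simps scaleR_2)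
    ultimately have "n2 \<bullet> (- (p - ps)) \<le> 0" by metis
    then have "n2 \<bullet> (p - ps) \<ge> 0" by (simp only: inner_minus_right neg_le_0_iff_le)
    with nn(3) pA show ?thesis by force
  qed
  show ?thesis
  proof (intro exI conjI ballI)
    fix p assume pD: "p \<in> D"
    show "G ps + (- n1 - c) \<bullet> (p - ps) \<le> G p"
      using S1'[OF pD] n2z[OF pD] nn(1) by (simp add: inner_add_left inner_diff_left algebra_simps)
  next
    fix p assume "p \<in> P"
    then show "0 \<le> (- n1 - c + c) \<bullet> (p - ps)" using nn(2) by simp
  qed
qed



lemma kernel_range:
  fixes B :: "real^'n^'r" and r :: "real^'n"
  assumes ker: "\<forall>d. (\<forall>i. Q i \<longrightarrow> (B *v d) $ i = 0) \<longrightarrow> r \<bullet> d = 0"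
  shows "\<exists>z. (\<forall>i. \<not> Q i \<longrightarrow> z $ i = 0) \<and> r = transpose B *v z"
proof -
  define Z where "Z = {z::real^'r. \<forall>i. \<not> Q i \<longrightarrow> z $ i = 0}"
  define R where "R = (\<lambda>z. transpose B *v z) ` Z"
  have subZ: "subspace Z" unfolding Z_def subspace_def by auto
  have subR: "subspace R" unfolding R_def
    by (rule linear_subspace_image[OF matrix_vector_mul_linear subZ])
  obtain y q where yq: "y \<in> span R" "\<And>w. w \<in> span R \<Longrightarrow> orthogonal q w" "r = y + q"
    using orthogonal_subspace_decomp_exists[of R r] by blast
  have yR: "y \<in> R" using yq(1) subR by (metis span_eq_iff)
  have Bq: "(B *v q) $ i = 0" if "Q i" for i
  proof -
    have "axis i 1 \<in> Z" unfolding Z_def using that by (auto simp: axis_def)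
    then have "transpose B *v axis i 1 \<in> R" unfolding R_def by blast
    then have "q \<bullet> (transpose B *v axis i 1) = 0"
      using yq(2) span_base by (fastforce simp: orthogonal_def)
    then have "axis i 1 \<bullet> (B *v q) = 0" by (metis inner_commute dot_lmul_matrix vector_transpose_matrix)
    then show ?thesis by (simp add: cart_eq_inner_axis inner_commute)
  qed
  have "r \<bullet> q = 0" using ker Bq by blast
  moreover have "y \<bullet> q = 0" using yq(2)[OF yq(1)] by (simp add: orthogonal_def inner_commute)
  ultimately have "q \<bullet> q = 0" using yq(3) by (simp add: inner_add_left)
  then have "q = 0" by simp
  then have "r \<in> R" using yq(3) yR by simp
  then show ?thesis unfolding R_def Z_def by blast
qed

lemma proper_finite:
  assumes "proper_fun f" "f x < \<infinity>"
  shows "f x = ereal (real_of_ereal (f x))"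
  using assms unfolding proper_fun_def by (cases "f x") auto

lemma convex_fun_on:
  fixes f :: "'a::real_vector \<Rightarrow> ereal"
  assumes cf: "convex_fun f" and pf: "proper_fun f"
  shows "convex_on (edom f) (\<lambda>x. real_of_ereal (f x))"
proof -
  have key: "f (u *\<^sub>R x + v *\<^sub>R y) < \<infinity> \<and>
      real_of_ereal (f (u *\<^sub>R x + v *\<^sub>R y)) \<le> u * real_of_ereal (f x) + v * real_of_ereal (f y)"
    if x: "f x < \<infinity>" and y: "f y < \<infinity>" and uv: "0 \<le> u" "0 \<le> v" "u + v = 1" for x y u v
  proof (cases "u = 0 \<or> v = 0")
    case True
    then show ?thesis using uv x y by (auto simp: add_eq_0_iff)
  next
    case False
    then have t: "0 < v" "v < 1" using uv by auto
    have u: "u = 1 - v" using uv by simp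
    obtain a where a: "f x = ereal a" using proper_finite[OF pf x] by blast
    obtain c where c: "f y = ereal c" using proper_finite[OF pf y] by blast
    have "f ((1 - v) *\<^sub>R x + v *\<^sub>R y) \<le> ereal (1 - v) * f x + ereal v * f y"
      using cf t unfolding convex_fun_def by blast
    then have le: "f (u *\<^sub>R x + v *\<^sub>R y) \<le> ereal (u * a + v * c)" using a c u by simp
    moreover have "f (u *\<^sub>R x + v *\<^sub>R y) \<noteq> -\<infinity>" using pf unfolding proper_fun_def by blast
    ultimately show ?thesis using a c by (cases "f (u *\<^sub>R x + v *\<^sub>R y)") auto
  qed
  show ?thesis unfolding convex_on_def convex_def edom_def using key by auto
qed

lemma Phi0_local:
  fixes B :: "real^'n^'r" and z lam u :: "real^'r"
  assumes lam: "\<forall>i. lam $ i > 0" and zs: "\<forall>i. u $ i \<noteq> 0 \<longrightarrow> z $ i = 0"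
  shows "\<exists>d>0. \<forall>e. norm e < d \<longrightarrow> Phi0 lam (u + e) \<ge> Phi0 lam u + z \<bullet> e"
proof -
  define \<delta> where "\<delta> i = (if u $ i \<noteq> 0 then \<bar>u $ i\<bar> else lam $ i / (\<bar>z $ i\<bar> + 1))" for i
  have dpos: "\<delta> i > 0" for i unfolding \<delta>_def using lam by (auto intro!: divide_pos_pos add_nonneg_pos)
  define d where "d = Min (range \<delta>)"
  have dpos': "d > 0" unfolding d_def using dpos by (subst Min_gr_iff) auto
  have dle: "d \<le> \<delta> i" for i unfolding d_def by (rule Min_le) auto
  show ?thesis
  proof (intro exI conjI allI impI)
    show "d > 0" by fact
    fix e :: "real^'r" assume ne: "norm e < d"
    have comp: "(if (u + e) $ i \<noteq> 0 then lam $ i else 0) \<ge> (if u $ i \<noteq> 0 then lam $ i else 0) + z $ i * e $ i" for i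
    proof -
      have ei: "\<bar>e $ i\<bar> < \<delta> i" using component_le_norm_cart[of e i] ne dle[of i] by linarith
      show ?thesis
      proof (cases "u $ i \<noteq> 0")
        case True
        then have "\<bar>e $ i\<bar> < \<bar>u $ i\<bar>" using ei by (simp add: \<delta>_def)
        then have "(u + e) $ i \<noteq> 0" by auto
        then show ?thesis using True zs by simp
      next
        case False
        then have ei2: "\<bar>e $ i\<bar> < lam $ i / (\<bar>z $ i\<bar> + 1)" using ei by (simp add: \<delta>_def)
        show ?thesis
        proof (cases "e $ i = 0")
          case True then show ?thesis using False by simp
        next
          case ne0: False
          have "z $ i * e $ i \<le> \<bar>z $ i\<bar> * \<bar>e $ i\<bar>" by (metis abs_ge_self abs_mult)
          also have "\<dots> \<le> (\<bar>z $ i\<bar> + 1) * \<bar>e $ i\<bar>" by (simp add: mult_right_mono)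
          also have "\<dots> < lam $ i" using ei2 by (simp add: field_simps add_nonneg_pos)
          finally show ?thesis using False ne0 by simp
        qed
      qed
    qed
    have "Phi0 lam u + z \<bullet> e = (\<Sum>i\<in>UNIV. (if u $ i \<noteq> 0 then lam $ i else 0) + z $ i * e $ i)"
      unfolding Phi0_def inner_vec_def by (simp add: sum.distrib)
    also have "\<dots> \<le> Phi0 lam (u + e)" unfolding Phi0_def by (rule sum_mono) (use comp in auto)
    finally show "Phi0 lam u + z \<bullet> e \<le> Phi0 lam (u + e)" .
  qed
qed



lemma matvec_cont: "isCont (\<lambda>y. (B::real^'n^'m) *v y) x"
  by (rule linear_continuous_at) (simp add: linear_linear matrix_vector_mul_linear)

lemma part1:
  fixes f :: "real^'n \<Rightarrow> ereal" and g :: "real^'m \<Rightarrow> ereal"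
    and A :: "real^'n^'m" and B :: "real^'n^'r" and b lam :: "real^'r"
  assumes pf: "proper_fun f" and pg: "proper_fun g" and lam: "\<forall>i. lam $ i > 0"
    and st: "stationary_P f g A B b x"
  shows "local_min (Fobj f g A B b lam) x"
proof -
  obtain v w z where vwz: "v \<in> csubdiff f x" "w \<in> csubdiff g (A *v x)"
      "z \<in> subdiff_Phi0 (B *v x - b)" "v + transpose A *v w + transpose B *v z = 0"
    using st unfolding stationary_P_def by blast
  have zs: "\<forall>i. (B *v x - b) $ i \<noteq> 0 \<longrightarrow> z $ i = 0" using vwz(3) by (simp add: subdiff_Phi0_def)
  obtain d where d: "d > 0" "\<forall>e. norm e < d \<longrightarrow> Phi0 lam (B *v x - b) + z \<bullet> e \<le> Phi0 lam (B *v x - b + e)"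
    using Phi0_local[OF lam zs] by blast
  obtain \<epsilon> where eps: "\<epsilon> > 0" "\<forall>y. dist y x < \<epsilon> \<longrightarrow> dist (B *v y) (B *v x) < d"
    using matvec_cont[where B=B and x=x] d(1) unfolding continuous_at_eps_delta by blast
  have fx: "f x = ereal (real_of_ereal (f x))"
    using proper_finite[OF pf] vwz(1) by (simp add: csubdiff_def)
  have gx: "g (A *v x) = ereal (real_of_ereal (g (A *v x)))"
    using proper_finite[OF pg] vwz(2) by (simp add: csubdiff_def)
  show ?thesis unfolding local_min_def
  proof (intro exI conjI ballI)
    show "\<epsilon> > 0" by fact
    fix y assume "y \<in> ball x \<epsilon>"
    then have dy: "dist y x < \<epsilon>" by (simp add: dist_commute)
    define e where "e = B *v y - B *v x"
    have ne: "norm e < d" using eps dy by (simp add: e_def dist_norm)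
    have h1: "f x + ereal (v \<bullet> (y - x)) \<le> f y" using vwz(1) by (simp add: csubdiff_def)
    have h2: "g (A *v x) + ereal (w \<bullet> (A *v y - A *v x)) \<le> g (A *v y)"
      using vwz(2) by (simp add: csubdiff_def)
    have h3: "Phi0 lam (B *v x - b) + z \<bullet> e \<le> Phi0 lam (B *v y - b)"
    proof -
      have "B *v x - b + e = B *v y - b" by (simp add: e_def)
      then show ?thesis using d(2) ne by metis
    qed
    have key: "v \<bullet> (y - x) + w \<bullet> (A *v y - A *v x) + z \<bullet> e = 0"
    proof -
      have "w \<bullet> (A *v y - A *v x) = (transpose A *v w) \<bullet> (y - x)"
        by (simp add: dot_lmul_matrix matrix_vector_mult_diff_distrib)
      moreover have "z \<bullet> e = (transpose B *v z) \<bullet> (y - x)"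
        by (simp add: e_def dot_lmul_matrix matrix_vector_mult_diff_distrib)
      ultimately have "v \<bullet> (y - x) + w \<bullet> (A *v y - A *v x) + z \<bullet> e
          = (v + transpose A *v w + transpose B *v z) \<bullet> (y - x)"
        by (simp add: inner_add_left)
      then show ?thesis using vwz(4) by simp
    qed
    obtain rf where rf: "f x = ereal rf" using fx by blast
    obtain rg where rg: "g (A *v x) = ereal rg" using gx by blast
    have "Fobj f g A B b lam x = (f x + ereal (v \<bullet> (y - x))) + (g (A *v x) + ereal (w \<bullet> (A *v y - A *v x)))
        + ereal (Phi0 lam (B *v x - b) + z \<bullet> e)"
    proof -
      have "rf + rg + Phi0 lam (B *v x - b) = (rf + v \<bullet> (y - x)) + (rg + w \<bullet> (A *v y - A *v x))
          + (Phi0 lam (B *v x - b) + z \<bullet> e)" using key by linarith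
      then show ?thesis unfolding Fobj_def rf rg by simp
    qed
    also have "\<dots> \<le> f y + g (A *v y) + ereal (Phi0 lam (B *v y - b))"
      using h1 h2 h3 by (intro add_mono) auto
    finally show "Fobj f g A B b lam x \<le> Fobj f g A B b lam y" by (simp add: Fobj_def)
  qed
qed



lemma part2_global:
  fixes f :: "real^'n \<Rightarrow> ereal" and g :: "real^'m \<Rightarrow> ereal"
    and A :: "real^'n^'m" and B :: "real^'n^'r" and b lam :: "real^'r"
  assumes pf: "proper_fun f" and cf: "convex_fun f" and pg: "proper_fun g" and cg: "convex_fun g"
    and lm: "local_min (Fobj f g A B b lam) xs" and fin: "Fobj f g A B b lam xs < \<infinity>"
  shows "f xs < \<infinity>" "g (A *v xs) < \<infinity>"
    "\<And>x. (\<forall>i. (B *v xs - b) $ i = 0 \<longrightarrow> (B *v x - b) $ i = 0) \<Longrightarrow> f x < \<infinity> \<Longrightarrow> g (A *v x) < \<infinity> \<Longrightarrow>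
      real_of_ereal (f xs) + real_of_ereal (g (A *v xs)) \<le> real_of_ereal (f x) + real_of_ereal (g (A *v x))"
proof -
  have nf: "f y \<noteq> -\<infinity>" for y using pf by (simp add: proper_fun_def)
  have ng: "g y \<noteq> -\<infinity>" for y using pg by (simp add: proper_fun_def)
  have sum_fin: "f xs + g (A *v xs) < \<infinity>" using fin unfolding Fobj_def by simp
  show fxs: "f xs < \<infinity>" using sum_fin ng[of "A *v xs"] by (cases "f xs") auto
  show gxs: "g (A *v xs) < \<infinity>" using sum_fin nf[of xs] by (cases "g (A *v xs)") auto
  obtain \<epsilon>1 where e1: "\<epsilon>1 > 0" "\<forall>y\<in>ball xs \<epsilon>1. Fobj f g A B b lam xs \<le> Fobj f g A B b lam y"
    using lm unfolding local_min_def by blast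
  have ev: "\<forall>i. \<forall>\<^sub>F y in nhds xs. (B *v xs - b) $ i \<noteq> 0 \<longrightarrow> (B *v y - b) $ i \<noteq> 0"
  proof
    fix i
    show "\<forall>\<^sub>F y in nhds xs. (B *v xs - b) $ i \<noteq> 0 \<longrightarrow> (B *v y - b) $ i \<noteq> 0"
    proof (cases "(B *v xs - b) $ i = 0")
      case True then show ?thesis by simp
    next
      case False
      have "isCont (\<lambda>y. (B *v y - b) $ i) xs" by (intro continuous_intros)
      then have "((\<lambda>y. (B *v y - b) $ i) \<longlongrightarrow> (B *v xs - b) $ i) (nhds xs)"
        by (simp add: isCont_def tendsto_nhds_iff)
      from tendsto_imp_eventually_ne[OF this False] show ?thesis by (rule eventually_mono) simp
    qed
  qed
  then have "\<forall>\<^sub>F y in nhds xs. \<forall>i. (B *v xs - b) $ i \<noteq> 0 \<longrightarrow> (B *v y - b) $ i \<noteq> 0"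
    by (intro eventually_all_finite) blast
  then obtain \<epsilon>2 where e2: "\<epsilon>2 > 0" "\<forall>y. dist y xs < \<epsilon>2 \<longrightarrow> (\<forall>i. (B *v xs - b) $ i \<noteq> 0 \<longrightarrow> (B *v y - b) $ i \<noteq> 0)"
    unfolding eventually_nhds_metric by blast
  define \<epsilon> where "\<epsilon> = min \<epsilon>1 \<epsilon>2"
  have eps: "\<epsilon> > 0" using e1 e2 by (simp add: \<epsilon>_def)
  have loc: "f xs + g (A *v xs) \<le> f y + g (A *v y)"
    if yL: "\<forall>i. (B *v xs - b) $ i = 0 \<longrightarrow> (B *v y - b) $ i = 0" and dy: "dist y xs < \<epsilon>" for y
  proof -
    have "Phi0 lam (B *v y - b) = Phi0 lam (B *v xs - b)"
      unfolding Phi0_def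
    proof (rule sum.cong[OF refl])
      fix i
      have "(B *v y - b) $ i \<noteq> 0 \<longleftrightarrow> (B *v xs - b) $ i \<noteq> 0"
        using yL e2(2) dy by (auto simp: \<epsilon>_def)
      then show "(if (B *v y - b) $ i \<noteq> 0 then lam $ i else 0) = (if (B *v xs - b) $ i \<noteq> 0 then lam $ i else 0)"
        by simp
    qed
    moreover have "y \<in> ball xs \<epsilon>1" using dy by (simp add: \<epsilon>_def dist_commute)
    ultimately have "f xs + g (A *v xs) + ereal (Phi0 lam (B *v xs - b)) \<le> f y + g (A *v y) + ereal (Phi0 lam (B *v xs - b))"
      using e1(2) unfolding Fobj_def by metis
    then show ?thesis by (simp add: ereal_add_le_add_iff2)
  qed
  have cvf: "convex_on (edom f) (\<lambda>x. real_of_ereal (f x))" by (rule convex_fun_on[OF cf pf])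
  have cvg: "convex_on (edom g) (\<lambda>x. real_of_ereal (g x))" by (rule convex_fun_on[OF cg pg])
  fix x
  assume xL: "\<forall>i. (B *v xs - b) $ i = 0 \<longrightarrow> (B *v x - b) $ i = 0" and fx: "f x < \<infinity>" and gx: "g (A *v x) < \<infinity>"
  define t where "t = min (1/2) (\<epsilon> / (2 * norm (x - xs) + 2))"
  have "2 * norm (x - xs) + 2 > 0" using norm_ge_zero[of "x - xs"] by linarith
  then have t0: "t > 0" unfolding t_def using eps by (simp add: divide_pos_pos)
  have t1: "t < 1" unfolding t_def by simp
  define y where "y = (1 - t) *\<^sub>R xs + t *\<^sub>R x"
  have dy: "dist y xs < \<epsilon>"
  proof -
    have "y - xs = t *\<^sub>R (x - xs)" by (simp add: y_def algebra_simps)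
    then have "dist y xs = t * norm (x - xs)" using t0 by (simp add: dist_norm)
    also have "\<dots> \<le> (\<epsilon> / (2 * norm (x - xs) + 2)) * norm (x - xs)"
      unfolding t_def by (intro mult_right_mono) auto
    also have "\<dots> < \<epsilon>"
    proof -
      have "\<epsilon> * norm (x - xs) < \<epsilon> * (2 * norm (x - xs) + 2)"
        using eps norm_ge_zero[of "x - xs"] by (intro mult_strict_left_mono) linarith+
      moreover have "2 * norm (x - xs) + 2 > 0" using norm_ge_zero[of "x - xs"] by linarith
      ultimately show ?thesis by (simp add: field_simps)
    qed
    finally show ?thesis .
  qed
  have By: "B *v y - b = (1 - t) *\<^sub>R (B *v xs - b) + t *\<^sub>R (B *v x - b)"
    by (simp add: y_def matrix_vector_right_distrib matrix_vector_mult_scaleR algebra_simps)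
  have yL: "\<forall>i. (B *v xs - b) $ i = 0 \<longrightarrow> (B *v y - b) $ i = 0" using xL by (simp add: By)
  have Ay: "A *v y = (1 - t) *\<^sub>R (A *v xs) + t *\<^sub>R (A *v x)"
    by (simp add: y_def matrix_vector_right_distrib matrix_vector_mult_scaleR)
  have xsD: "xs \<in> edom f" "x \<in> edom f" "A *v xs \<in> edom g" "A *v x \<in> edom g"
    using fxs fx gxs gx by (auto simp: edom_def)
  have yD: "y \<in> edom f" using cvf xsD t0 t1 unfolding convex_on_def convex_def y_def by auto
  have AyD: "A *v y \<in> edom g" using cvg xsD t0 t1 unfolding convex_on_def convex_def Ay by auto
  have cf1: "real_of_ereal (f y) \<le> (1 - t) * real_of_ereal (f xs) + t * real_of_ereal (f x)"
    using cvf xsD t0 t1 unfolding convex_on_def y_def by auto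
  have cg1: "real_of_ereal (g (A *v y)) \<le> (1 - t) * real_of_ereal (g (A *v xs)) + t * real_of_ereal (g (A *v x))"
    using cvg xsD t0 t1 unfolding convex_on_def Ay by auto
  have "f xs + g (A *v xs) \<le> f y + g (A *v y)" by (rule loc[OF yL dy])
  moreover have "f xs + g (A *v xs) = ereal (real_of_ereal (f xs) + real_of_ereal (g (A *v xs)))"
    using proper_finite[OF pf fxs] proper_finite[OF pg gxs] by (metis plus_ereal.simps(1))
  moreover have "f y + g (A *v y) = ereal (real_of_ereal (f y) + real_of_ereal (g (A *v y)))"
    using proper_finite[OF pf] proper_finite[OF pg] yD AyD unfolding edom_def by (metis mem_Collect_eq plus_ereal.simps(1))
  ultimately have le: "real_of_ereal (f xs) + real_of_ereal (g (A *v xs)) \<le> real_of_ereal (f y) + real_of_ereal (g (A *v y))"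
    by simp
  have "t * (real_of_ereal (f xs) + real_of_ereal (g (A *v xs))) \<le> t * (real_of_ereal (f x) + real_of_ereal (g (A *v x)))"
    using le cf1 cg1 by (simp add: algebra_simps)
  then show "real_of_ereal (f xs) + real_of_ereal (g (A *v xs)) \<le> real_of_ereal (f x) + real_of_ereal (g (A *v x))"
    using t0 by simp
qed



lemma convex_on_comp_linear:
  assumes h: "convex_on S h" and l: "linear l" and T: "convex T" and TS: "\<forall>p\<in>T. l p \<in> S"
  shows "convex_on T (\<lambda>p. h (l p))"
  unfolding convex_on_def
proof (intro conjI ballI allI impI)
  show "convex T" by fact
  fix x y and u v :: real
  assume xy: "x \<in> T" "y \<in> T" and uv: "0 \<le> u" "0 \<le> v" "u + v = 1"
  have "l (u *\<^sub>R x + v *\<^sub>R y) = u *\<^sub>R l x + v *\<^sub>R l y"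
    using l by (simp add: linear_add linear_scale)
  moreover have "h (u *\<^sub>R l x + v *\<^sub>R l y) \<le> u * h (l x) + v * h (l y)"
    using h xy TS uv unfolding convex_on_def by blast
  ultimately show "h (l (u *\<^sub>R x + v *\<^sub>R y)) \<le> u * h (l x) + v * h (l y)" by simp
qed

lemma lin1: "linear (\<lambda>p::('a::real_vector \<times> 'b::real_vector \<times> real \<times> real). fst p)"
  by (simp add: linear_iff)
lemma lin2: "linear (\<lambda>p::('a::real_vector \<times> 'b::real_vector \<times> real \<times> real). fst (snd p))"
  by (simp add: linear_iff)
lemma lin3: "linear (\<lambda>p::('a::real_vector \<times> 'b::real_vector \<times> real \<times> real). (fst p, fst (snd (snd p))))"
  by (simp add: linear_iff)
lemma lin4: "linear (\<lambda>p::('a::real_vector \<times> 'b::real_vector \<times> real \<times> real). (fst (snd p), snd (snd (snd p))))"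
  by (simp add: linear_iff)

lemma affine_K:
  fixes A :: "real^'n^'m" and B :: "real^'n^'r" and b :: "real^'r"
  shows "affine {p::((real^'n) \<times> (real^'m) \<times> real \<times> real). fst (snd p) = A *v fst p \<and> (\<forall>i. Q i \<longrightarrow> (B *v fst p - b) $ i = 0)}"
  unfolding affine_def
proof (intro ballI allI impI)
  fix p q :: "(real^'n) \<times> (real^'m) \<times> real \<times> real" and u v :: real
  assume p: "p \<in> {p. fst (snd p) = A *v fst p \<and> (\<forall>i. Q i \<longrightarrow> (B *v fst p - b) $ i = 0)}"
    and q: "q \<in> {p. fst (snd p) = A *v fst p \<and> (\<forall>i. Q i \<longrightarrow> (B *v fst p - b) $ i = 0)}"
    and uv: "u + v = 1"
  have 1: "fst (snd (u *\<^sub>R p + v *\<^sub>R q)) = A *v fst (u *\<^sub>R p + v *\<^sub>R q)"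
    using p q by (simp add: matrix_vector_right_distrib matrix_vector_mult_scaleR)
  have 2: "(B *v fst (u *\<^sub>R p + v *\<^sub>R q) - b) $ i = 0" if "Q i" for i
  proof -
    have "(B *v fst (u *\<^sub>R p + v *\<^sub>R q) - b) $ i
        = u * (B *v fst p - b) $ i + v * (B *v fst q - b) $ i"
      using uv by (simp add: matrix_vector_right_distrib matrix_vector_mult_scaleR algebra_simps)
        (metis add.commute diff_add_cancel distrib_right mult_1)
    then show ?thesis using p q that by simp
  qed
  show "u *\<^sub>R p + v *\<^sub>R q \<in> {p. fst (snd p) = A *v fst p \<and> (\<forall>i. Q i \<longrightarrow> (B *v fst p - b) $ i = 0)}"
    using 1 2 by simp
qed



lemma self_le0: "(x::'a::real_inner) \<bullet> x \<le> 0 \<longleftrightarrow> x = 0"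
  using inner_ge_zero[of x] inner_eq_zero_iff[of x] by linarith

lemma part2:
  fixes f :: "real^'n \<Rightarrow> ereal" and g :: "real^'m \<Rightarrow> ereal"
    and A :: "real^'n^'m" and B :: "real^'n^'r" and b lam :: "real^'r"
  assumes pf: "proper_fun f" and cf: "convex_fun f" and pg: "proper_fun g" and cg: "convex_fun g"
    and lm: "local_min (Fobj f g A B b lam) xs" and fin: "Fobj f g A B b lam xs < \<infinity>"
    and cq: "\<exists>x. (if polyhedral_fun f then x \<in> edom f else x \<in> rel_interior (edom f))
              \<and> (if polyhedral_fun g then A *v x \<in> edom g else A *v x \<in> rel_interior (edom g))
              \<and> (\<forall>i. (B *v xs - b) $ i = 0 \<longrightarrow> (B *v x - b) $ i = 0)"
  shows "stationary_P f g A B b xs"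
proof -
  obtain x0 where x0: "(if polyhedral_fun f then x0 \<in> edom f else x0 \<in> rel_interior (edom f))"
      "(if polyhedral_fun g then A *v x0 \<in> edom g else A *v x0 \<in> rel_interior (edom g))"
      "\<forall>i. (B *v xs - b) $ i = 0 \<longrightarrow> (B *v x0 - b) $ i = 0"
    using cq by blast
  note glob = part2_global[OF pf cf pg cg lm fin]
  have fxs: "f xs < \<infinity>" and gxs: "g (A *v xs) < \<infinity>" using glob(1,2) .
  define PF where "PF = polyhedral_fun f"
  define PG where "PG = polyhedral_fun g"
  define Q where "Q i \<longleftrightarrow> (B *v xs - b) $ i = 0" for i
  define sf where "sf = real_of_ereal (f xs)"
  define sg where "sg = real_of_ereal (g (A *v xs))"
  have fxs': "f xs = ereal sf" unfolding sf_def by (rule proper_finite[OF pf fxs])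
  have gxs': "g (A *v xs) = ereal sg" unfolding sg_def by (rule proper_finite[OF pg gxs])
  have nf: "f y \<noteq> -\<infinity>" for y using pf by (simp add: proper_fun_def)
  have ng: "g y \<noteq> -\<infinity>" for y using pg by (simp add: proper_fun_def)
  have cvf: "convex_on (edom f) (\<lambda>x. real_of_ereal (f x))" by (rule convex_fun_on[OF cf pf])
  have cvg: "convex_on (edom g) (\<lambda>x. real_of_ereal (g x))" by (rule convex_fun_on[OF cg pg])
  define Df where "Df = (if PF then UNIV else edom f)"
  define Dg where "Dg = (if PG then UNIV else edom g)"
  define G1 where "G1 = (\<lambda>x. if PF then 0 else real_of_ereal (f x))"
  define G2 where "G2 = (\<lambda>y. if PG then 0 else real_of_ereal (g y))"
  have cDf: "convex Df" using cvf by (simp add: Df_def convex_on_def)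
  have cDg: "convex Dg" using cvg by (simp add: Dg_def convex_on_def)
  have cG1: "convex_on Df G1"
    using cvf by (cases PF) (auto simp: Df_def G1_def convex_on_const)
  have cG2: "convex_on Dg G2"
    using cvg by (cases PG) (auto simp: Dg_def G2_def convex_on_const)
  define D :: "((real^'n) \<times> (real^'m) \<times> real \<times> real) set" where "D = Df \<times> Dg \<times> UNIV"
  define G :: "(real^'n) \<times> (real^'m) \<times> real \<times> real \<Rightarrow> real"
    where "G = (\<lambda>p. G1 (fst p) + G2 (fst (snd p)))"
  define c :: "(real^'n) \<times> (real^'m) \<times> real \<times> real"
    where "c = (0, 0, if PF then 1 else 0, if PG then 1 else 0)"
  define Pf :: "((real^'n) \<times> (real^'m) \<times> real \<times> real) set"
    where "Pf = {p. PF \<longrightarrow> f (fst p) \<le> ereal (fst (snd (snd p)))}"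
  define Pg :: "((real^'n) \<times> (real^'m) \<times> real \<times> real) set"
    where "Pg = {p. PG \<longrightarrow> g (fst (snd p)) \<le> ereal (snd (snd (snd p)))}"
  define K :: "((real^'n) \<times> (real^'m) \<times> real \<times> real) set"
    where "K = {p. fst (snd p) = A *v fst p \<and> (\<forall>i. Q i \<longrightarrow> (B *v fst p - b) $ i = 0)}"
  define ps :: "(real^'n) \<times> (real^'m) \<times> real \<times> real" where "ps = (xs, A *v xs, sf, sg)"
  define p0 :: "(real^'n) \<times> (real^'m) \<times> real \<times> real"
    where "p0 = (x0, A *v x0, real_of_ereal (f x0), real_of_ereal (g (A *v x0)))"
  have cD: "convex D" unfolding D_def using cDf cDg by (intro convex_Times) auto
  have cvG: "convex_on D G"
  proof -
    have "convex_on D (\<lambda>p. G1 (fst p))"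
      by (rule convex_on_comp_linear[OF cG1 lin1 cD]) (auto simp: D_def)
    moreover have "convex_on D (\<lambda>p. G2 (fst (snd p)))"
      by (rule convex_on_comp_linear[OF cG2 lin2 cD]) (auto simp: D_def)
    ultimately show ?thesis unfolding G_def by (rule convex_on_add)
  qed
  have polyPf: "polyhedron Pf"
  proof (cases PF)
    case True
    have e: "Pf = (\<lambda>p. (fst p, fst (snd (snd p)))) -` {(x, t::real). f x \<le> ereal t}"
      using True by (auto simp: Pf_def)
    moreover have "polyhedron {(x, t::real). f x \<le> ereal t}" using True by (simp add: PF_def polyhedral_fun_def)
    from polyhedron_linear_preimage[OF this lin3] show ?thesis unfolding e .
  next
    case False then show ?thesis by (simp add: Pf_def)
  qed
  have polyPg: "polyhedron Pg"
  proof (cases PG)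
    case True
    have e: "Pg = (\<lambda>p. (fst (snd p), snd (snd (snd p)))) -` {(x, t::real). g x \<le> ereal t}"
      using True by (auto simp: Pg_def)
    moreover have "polyhedron {(x, t::real). g x \<le> ereal t}" using True by (simp add: PG_def polyhedral_fun_def)
    from polyhedron_linear_preimage[OF this lin4] show ?thesis unfolding e .
  next
    case False then show ?thesis by (simp add: Pg_def)
  qed
  have polyK: "polyhedron K" unfolding K_def by (rule affine_imp_polyhedron[OF affine_K])
  define P where "P = Pf \<inter> (Pg \<inter> K)"
  have polyP: "polyhedron P" unfolding P_def using polyPf polyPg polyK by simp
  have psD: "ps \<in> D" using fxs gxs by (simp add: ps_def D_def Df_def Dg_def edom_def)
  have psP: "ps \<in> P" using fxs' gxs' by (simp add: ps_def P_def Pf_def Pg_def K_def Q_def)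
  have opt: "\<forall>p\<in>D\<inter>P. G ps + c \<bullet> ps \<le> G p + c \<bullet> p"
  proof
    fix p assume pDP: "p \<in> D \<inter> P"
    obtain x y s t where p: "p = (x, y, s, t)" by (metis prod.collapse)
    have y: "y = A *v x" and xL: "\<forall>i. (B *v xs - b) $ i = 0 \<longrightarrow> (B *v x - b) $ i = 0"
      using pDP by (auto simp: p P_def K_def Q_def)
    have fs: "PF \<Longrightarrow> f x \<le> ereal s" and gt: "PG \<Longrightarrow> g y \<le> ereal t"
      using pDP by (auto simp: p P_def Pf_def Pg_def)
    have xD: "f x < \<infinity>"
      using pDP fs by (cases PF) (auto simp: p D_def Df_def edom_def le_less_trans)
    have yD: "g y < \<infinity>"
      using pDP gt by (cases PG) (auto simp: p D_def Dg_def edom_def le_less_trans)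
    have f1: "real_of_ereal (f x) \<le> (if PF then s else 0) + G1 x"
    proof (cases PF)
      case True
      then have "f x \<le> ereal s" by (rule fs)
      then show ?thesis using True proper_finite[OF pf xD] by (simp add: G1_def) (metis ereal_less_eq(3))
    qed (simp add: G1_def)
    have g1: "real_of_ereal (g y) \<le> (if PG then t else 0) + G2 y"
    proof (cases PG)
      case True
      then have "g y \<le> ereal t" by (rule gt)
      then show ?thesis using True proper_finite[OF pg yD] by (simp add: G2_def) (metis ereal_less_eq(3))
    qed (simp add: G2_def)
    have "G ps + c \<bullet> ps = sf + sg"
      by (simp add: G_def G1_def G2_def c_def ps_def sf_def sg_def)
    also have "\<dots> \<le> real_of_ereal (f x) + real_of_ereal (g y)"
      using glob(3)[OF xL xD] yD y by (simp add: sf_def sg_def)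
    also have "\<dots> \<le> G p + c \<bullet> p"
      using f1 g1 by (cases PF; cases PG; simp add: p G_def c_def)
    finally show "G ps + c \<bullet> ps \<le> G p + c \<bullet> p" .
  qed
  have p0D: "p0 \<in> rel_interior D"
  proof -
    have "rel_interior D = rel_interior Df \<times> rel_interior Dg \<times> UNIV"
      unfolding D_def using cDf cDg
      by (simp add: rel_interior_Times convex_Times)
    moreover have "x0 \<in> rel_interior Df" using x0(1) by (cases PF) (auto simp: Df_def PF_def)
    moreover have "A *v x0 \<in> rel_interior Dg" using x0(2) by (cases PG) (auto simp: Dg_def PG_def)
    ultimately show ?thesis by (simp add: p0_def)
  qed
  have p0P: "p0 \<in> P"
  proof -
    have "PF \<Longrightarrow> f x0 < \<infinity>" using x0(1) by (simp add: PF_def edom_def)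
    then have a: "PF \<Longrightarrow> f x0 \<le> ereal (real_of_ereal (f x0))" using proper_finite[OF pf] by force
    have "PG \<Longrightarrow> g (A *v x0) < \<infinity>" using x0(2) by (simp add: PG_def edom_def)
    then have b: "PG \<Longrightarrow> g (A *v x0) \<le> ereal (real_of_ereal (g (A *v x0)))" using proper_finite[OF pg] by force
    show ?thesis using a b x0(3) by (simp add: p0_def P_def Pf_def Pg_def K_def Q_def)
  qed
  obtain u where uG: "\<forall>p\<in>D. G ps + u \<bullet> (p - ps) \<le> G p" and uP: "\<forall>p\<in>P. 0 \<le> (u + c) \<bullet> (p - ps)"
    using core_kkt[OF cvG polyP psD psP opt p0D p0P] by blast
  have psPf: "ps \<in> Pf" and psPg: "ps \<in> Pg" and psK: "ps \<in> K" using psP by (auto simp: P_def)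
  define n where "n = - (u + c)"
  have nP: "\<forall>q\<in>Pf \<inter> (Pg \<inter> K). n \<bullet> (q - ps) \<le> 0"
  proof
    fix q assume "q \<in> Pf \<inter> (Pg \<inter> K)"
    then have "0 \<le> (u + c) \<bullet> (q - ps)" using uP by (simp add: P_def)
    moreover have "n \<bullet> (q - ps) = - ((u + c) \<bullet> (q - ps))" unfolding n_def by (rule inner_minus_left)
    ultimately show "n \<bullet> (q - ps) \<le> 0" by simp
  qed
  obtain n1 m where nm: "n = n1 + m" "\<forall>q\<in>Pf. n1 \<bullet> (q - ps) \<le> 0" "\<forall>q\<in>Pg \<inter> K. m \<bullet> (q - ps) \<le> 0"
    using polyhedron_normal_split[OF polyPf polyhedron_Int[OF polyPg polyK] psPf _ nP] psPg psK by blast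
  obtain n2 n3 where m23: "m = n2 + n3" "\<forall>q\<in>Pg. n2 \<bullet> (q - ps) \<le> 0" "\<forall>q\<in>K. n3 \<bullet> (q - ps) \<le> 0"
    using polyhedron_normal_split[OF polyPg polyK psPg psK nm(3)] by blast
  obtain u1 u2 u3 u4 where u: "u = (u1, u2, u3, u4)" by (metis prod.collapse)
  obtain a1 b1 \<sigma>1 \<tau>1 where n1: "n1 = (a1, b1, \<sigma>1, \<tau>1)" by (metis prod.collapse)
  obtain a2 b2 \<sigma>2 \<tau>2 where n2: "n2 = (a2, b2, \<sigma>2, \<tau>2)" by (metis prod.collapse)
  obtain k1 k2 \<sigma>3 \<tau>3 where n3: "n3 = (k1, k2, \<sigma>3, \<tau>3)" by (metis prod.collapse)
  have xsDf: "xs \<in> Df" and AxsDg: "A *v xs \<in> Dg" using psD by (auto simp: ps_def D_def)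
  have uG': "G1 xs + u1 \<bullet> (x - xs) + u3 * e1 + u4 * e2 \<le> G1 x" if "x \<in> Df" for x e1 e2
  proof -
    have "(x, A *v xs, sf + e1, sg + e2) \<in> D" using that AxsDg by (simp add: D_def)
    from uG[rule_format, OF this] show ?thesis by (simp add: G_def ps_def u)
  qed
  have uG2: "G2 (A *v xs) + u2 \<bullet> (y - A *v xs) \<le> G2 y" if "y \<in> Dg" for y
  proof -
    have "(xs, y, sf, sg) \<in> D" using that xsDf by (simp add: D_def)
    from uG[rule_format, OF this] show ?thesis by (simp add: G_def ps_def u)
  qed
  have u3: "u3 = 0"
    using uG'[OF xsDf, of 1 0] uG'[OF xsDf, of "-1" 0] by simp
  have u4: "u4 = 0"
    using uG'[OF xsDf, of 0 1] uG'[OF xsDf, of 0 "-1"] by simp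
  have uG1: "G1 xs + u1 \<bullet> (x - xs) \<le> G1 x" if "x \<in> Df" for x
    using uG'[OF that, of 0 0] by simp
  have inPf: "(x, y, s, t) \<in> Pf \<longleftrightarrow> (PF \<longrightarrow> f x \<le> ereal s)" for x y s t by (simp add: Pf_def)
  have inPg: "(x, y, s, t) \<in> Pg \<longleftrightarrow> (PG \<longrightarrow> g y \<le> ereal t)" for x y s t by (simp add: Pg_def)
  have inK: "(x, y, s, t) \<in> K \<longleftrightarrow> y = A *v x \<and> (\<forall>i. Q i \<longrightarrow> (B *v x - b) $ i = 0)" for x y s t
    by (simp add: K_def)
  have ps': "ps = (xs, A *v xs, sf, sg)" by (simp add: ps_def)
  have psPf': "PF \<longrightarrow> f xs \<le> ereal sf" using psPf by (simp add: ps' inPf)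
  have psPg': "PG \<longrightarrow> g (A *v xs) \<le> ereal sg" using psPg by (simp add: ps' inPg)
  have psK': "\<forall>i. Q i \<longrightarrow> (B *v xs - b) $ i = 0" using psK by (simp add: ps' inK)
  have N1: "a1 \<bullet> (x - xs) + b1 \<bullet> (y - A *v xs) + \<sigma>1 * (s - sf) + \<tau>1 * (t - sg) \<le> 0"
    if "PF \<longrightarrow> f x \<le> ereal s" for x y s t
    using nm(2)[rule_format, of "(x, y, s, t)"] that by (simp add: inPf n1 ps')
  have N2: "a2 \<bullet> (x - xs) + b2 \<bullet> (y - A *v xs) + \<sigma>2 * (s - sf) + \<tau>2 * (t - sg) \<le> 0"
    if "PG \<longrightarrow> g y \<le> ereal t" for x y s t
    using m23(2)[rule_format, of "(x, y, s, t)"] that by (simp add: inPg n2 ps')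
  have N3: "k1 \<bullet> (x - xs) + k2 \<bullet> (y - A *v xs) + \<sigma>3 * (s - sf) + \<tau>3 * (t - sg) \<le> 0"
    if "y = A *v x" "\<forall>i. Q i \<longrightarrow> (B *v x - b) $ i = 0" for x y s t
    using m23(3)[rule_format, of "(x, y, s, t)"] that by (simp add: inK n3 ps')
  have b1: "b1 = 0" using N1[of xs sf "A *v xs + b1" sg] psPf' by (simp add: self_le0)
  have \<tau>1: "\<tau>1 = 0" using N1[of xs sf "A *v xs" "sg + 1"] N1[of xs sf "A *v xs" "sg - 1"] psPf' by simp
  have a2: "a2 = 0" using N2[of "A *v xs" sg "xs + a2" sf] psPg' by (simp add: self_le0)
  have \<sigma>2: "\<sigma>2 = 0" using N2[of "A *v xs" sg xs "sf + 1"] N2[of "A *v xs" sg xs "sf - 1"] psPg' by simp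
  have \<sigma>3: "\<sigma>3 = 0" using N3[of "A *v xs" xs "sf + 1" sg] N3[of "A *v xs" xs "sf - 1" sg] psK' by simp
  have eqn: "n1 + n2 + n3 = - (u + c)" using nm(1) m23(1) by (simp add: n_def add.assoc)
  then have cx: "a1 + a2 + k1 = - u1" and cy: "b1 + b2 + k2 = - u2"
     and cs: "\<sigma>1 + \<sigma>2 + \<sigma>3 = - (u3 + (if PF then 1 else 0))"
    by (simp_all add: n1 n2 n3 u c_def)
  define v where "v = u1 + a1"
  define w where "w = u2 + b2"
  have k1: "k1 = - v"
  proof -
    have "k1 = (a1 + a2 + k1) - a1 - a2" by simp
    also have "\<dots> = - u1 - a1" using cx a2 by simp
    finally show ?thesis by (simp add: v_def)
  qed
  have k2: "k2 = - w"
  proof -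
    have "k2 = (b1 + b2 + k2) - b1 - b2" by simp
    also have "\<dots> = - u2 - b2" using cy b1 by simp
    finally show ?thesis by (simp add: w_def)
  qed
  have vsub: "v \<in> csubdiff f xs"
  proof (cases PF)
    case True
    have u1: "u1 = 0"
    proof -
      have "xs + u1 \<in> Df" using True by (simp add: Df_def)
      from uG1[OF this] have "G1 xs + u1 \<bullet> (xs + u1 - xs) \<le> G1 (xs + u1)" .
      then have "u1 \<bullet> u1 \<le> 0" using True by (simp add: G1_def)
      then show ?thesis using inner_ge_zero[of u1] inner_eq_zero_iff[of u1] by linarith
    qed
    have \<sigma>1: "\<sigma>1 = -1" using cs \<sigma>2 \<sigma>3 u3 True by simp
    have "f xs + ereal (v \<bullet> (y - xs)) \<le> f y" for y
    proof (cases "f y < \<infinity>")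
      case False then show ?thesis by simp
    next
      case fy: True
      obtain r where r: "f y = ereal r" using proper_finite[OF pf fy] by blast
      have "a1 \<bullet> (y - xs) + b1 \<bullet> (A *v xs - A *v xs) + \<sigma>1 * (r - sf) + \<tau>1 * (sg - sg) \<le> 0"
        by (rule N1) (simp add: r)
      then have "sf + v \<bullet> (y - xs) \<le> r" using \<sigma>1 u1 by (simp add: v_def)
      then show ?thesis by (simp add: fxs' r)
    qed
    then show ?thesis using fxs by (simp add: csubdiff_def)
  next
    case False
    have a1: "a1 = 0"
    proof -
      have "a1 \<bullet> (xs + a1 - xs) + b1 \<bullet> (A *v xs - A *v xs) + \<sigma>1 * (sf + \<sigma>1 - sf) + \<tau>1 * (sg - sg) \<le> 0"
        by (rule N1) (simp add: False)
      then have "a1 \<bullet> a1 + \<sigma>1 * \<sigma>1 \<le> 0" by simp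
      moreover have "0 \<le> \<sigma>1 * \<sigma>1" by simp
      ultimately have "a1 \<bullet> a1 \<le> 0" by linarith
      then show ?thesis using inner_ge_zero[of a1] inner_eq_zero_iff[of a1] by linarith
    qed
    have "f xs + ereal (v \<bullet> (y - xs)) \<le> f y" for y
    proof (cases "f y < \<infinity>")
      case False then show ?thesis by simp
    next
      case fy: True
      obtain r where r: "f y = ereal r" using proper_finite[OF pf fy] by blast
      have "y \<in> Df" using fy False by (simp add: Df_def edom_def)
      from uG1[OF this] have "sf + u1 \<bullet> (y - xs) \<le> r" using False r by (simp add: G1_def sf_def)
      then show ?thesis by (simp add: fxs' r v_def a1)
    qed
    then show ?thesis using fxs by (simp add: csubdiff_def)
  qed
  have wsub: "w \<in> csubdiff g (A *v xs)"
  proof (cases PG)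
    case True
    have u2: "u2 = 0"
    proof -
      have "A *v xs + u2 \<in> Dg" using True by (simp add: Dg_def)
      from uG2[OF this] have "G2 (A *v xs) + u2 \<bullet> (A *v xs + u2 - A *v xs) \<le> G2 (A *v xs + u2)" .
      then have "u2 \<bullet> u2 \<le> 0" using True by (simp add: G2_def)
      then show ?thesis using inner_ge_zero[of u2] inner_eq_zero_iff[of u2] by linarith
    qed
    have ct: "\<tau>1 + \<tau>2 + \<tau>3 = - (u4 + (if PG then 1 else 0))"
      using eqn by (simp add: n1 n2 n3 u c_def)
    have \<tau>3: "\<tau>3 = 0" using N3[of "A *v xs" xs sf "sg + 1"] N3[of "A *v xs" xs sf "sg - 1"] psK' by simp
    have \<tau>2: "\<tau>2 = -1" using ct \<tau>1 \<tau>3 u4 True by simp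
    have "g (A *v xs) + ereal (w \<bullet> (y - A *v xs)) \<le> g y" for y
    proof (cases "g y < \<infinity>")
      case False then show ?thesis by simp
    next
      case gy: True
      obtain r where r: "g y = ereal r" using proper_finite[OF pg gy] by blast
      have "a2 \<bullet> (xs - xs) + b2 \<bullet> (y - A *v xs) + \<sigma>2 * (sf - sf) + \<tau>2 * (r - sg) \<le> 0"
        by (rule N2) (simp add: r)
      then have "sg + w \<bullet> (y - A *v xs) \<le> r" using \<tau>2 u2 by (simp add: w_def)
      then show ?thesis by (simp add: gxs' r)
    qed
    then show ?thesis using gxs by (simp add: csubdiff_def)
  next
    case False
    have b2: "b2 = 0"
    proof -
      have "a2 \<bullet> (xs - xs) + b2 \<bullet> (A *v xs + b2 - A *v xs) + \<sigma>2 * (sf - sf) + \<tau>2 * (sg + \<tau>2 - sg) \<le> 0"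
        by (rule N2) (simp add: False)
      then have "b2 \<bullet> b2 + \<tau>2 * \<tau>2 \<le> 0" by simp
      moreover have "0 \<le> \<tau>2 * \<tau>2" by simp
      ultimately have "b2 \<bullet> b2 \<le> 0" by linarith
      then show ?thesis using inner_ge_zero[of b2] inner_eq_zero_iff[of b2] by linarith
    qed
    have "g (A *v xs) + ereal (w \<bullet> (y - A *v xs)) \<le> g y" for y
    proof (cases "g y < \<infinity>")
      case False then show ?thesis by simp
    next
      case gy: True
      obtain r where r: "g y = ereal r" using proper_finite[OF pg gy] by blast
      have "y \<in> Dg" using gy False by (simp add: Dg_def edom_def)
      from uG2[OF this] have "sg + u2 \<bullet> (y - A *v xs) \<le> r" using False r by (simp add: G2_def sg_def)
      then show ?thesis by (simp add: gxs' r w_def b2)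
    qed
    then show ?thesis using gxs by (simp add: csubdiff_def)
  qed
  have ker: "\<forall>d. (\<forall>i. Q i \<longrightarrow> (B *v d) $ i = 0) \<longrightarrow> (- (v + transpose A *v w)) \<bullet> d = 0"
  proof (intro allI impI)
    fix d assume dk: "\<forall>i. Q i \<longrightarrow> (B *v d) $ i = 0"
    have Lp: "\<forall>i. Q i \<longrightarrow> (B *v (xs + d) - b) $ i = 0" using dk psK'
      by (simp add: matrix_vector_right_distrib)
    have Lm: "\<forall>i. Q i \<longrightarrow> (B *v (xs - d) - b) $ i = 0" using dk psK'
      by (simp add: matrix_vector_mult_diff_distrib)
    have "k1 \<bullet> (xs + d - xs) + k2 \<bullet> (A *v (xs + d) - A *v xs) + \<sigma>3 * (sf - sf) + \<tau>3 * (sg - sg) \<le> 0"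
      by (rule N3[OF refl Lp])
    then have h1: "k1 \<bullet> d + k2 \<bullet> (A *v d) \<le> 0" by (simp add: matrix_vector_right_distrib)
    have "k1 \<bullet> (xs - d - xs) + k2 \<bullet> (A *v (xs - d) - A *v xs) + \<sigma>3 * (sf - sf) + \<tau>3 * (sg - sg) \<le> 0"
      by (rule N3[OF refl Lm])
    then have h2: "k1 \<bullet> d + k2 \<bullet> (A *v d) \<ge> 0" by (simp add: matrix_vector_mult_diff_distrib)
    have "(- (v + transpose A *v w)) \<bullet> d = k1 \<bullet> d + k2 \<bullet> (A *v d)"
      by (simp add: k1 k2 inner_add_left inner_diff_left dot_lmul_matrix)
    then show "(- (v + transpose A *v w)) \<bullet> d = 0" using h1 h2 by simp
  qed
  obtain z where z: "\<forall>i. \<not> Q i \<longrightarrow> z $ i = 0" "- (v + transpose A *v w) = transpose B *v z"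
    using kernel_range[OF ker] by blast
  have zsub: "z \<in> subdiff_Phi0 (B *v xs - b)" using z(1) by (simp add: subdiff_Phi0_def Q_def)
  have "v + transpose A *v w + transpose B *v z = 0" using z(2) by (metis add.assoc add.right_inverse minus_add_distrib neg_equal_iff_equal)
  then show ?thesis unfolding stationary_P_def using vsub wsub zsub by blast
qed


theorem mainTheorem12:
  fixes f :: "real^'n \<Rightarrow> ereal" and g :: "real^'m \<Rightarrow> ereal"
    and A :: "real^'n^'m" and B :: "real^'n^'r" and b lam :: "real^'r"
  assumes f: "proper_fun f" "lsc_fun f" "convex_fun f"
    and g: "proper_fun g" "lsc_fun g" "convex_fun g"
    and lam: "\<forall>i. lam $ i > 0"
  shows "(\<forall>x. stationary_P f g A B b x \<longrightarrow> local_min (Fobj f g A B b lam) x)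
    \<and> (\<forall>xs. local_min (Fobj f g A B b lam) xs \<and> Fobj f g A B b lam xs < \<infinity> \<and>
           (\<exists>x. (if polyhedral_fun f then x \<in> edom f else x \<in> rel_interior (edom f))
              \<and> (if polyhedral_fun g then A *v x \<in> edom g else A *v x \<in> rel_interior (edom g))
              \<and> (\<forall>i. (B *v xs - b) $ i = 0 \<longrightarrow> (B *v x - b) $ i = 0))
           \<longrightarrow> stationary_P f g A B b xs)"
    using part1[OF f(1) g(1) lam] part2[OF f(1) f(3) g(1) g(3)] by blast

end
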